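(* Let $\kappa=1$ and, for $h>0$, let $\sigma(h)\in(0,1)$ be the unique value such that $$A(\lambda)=\frac{e^{-i\pi/4}\sqrt2\,\Gamma(\frac34-\frac12 i\lambda)}{\Gamma(\frac14-\frac12 i\lambda)},\qquad \lambda=-h^{-1}-i\sigma(h),$$ is real and positive. Then as $h\to0^+$, $$\sigma(h)=2e^{-\pi/h}h^{-1}(1+O(h)),$$ and as $h\to+\infty$, $$\sigma(h)=\tfrac12-h^{-1}+O(h^{-2}).$$
   Context: The existence and uniqueness of $\sigma(h)\in(0,1)$ with $A(\lambda)$ real and positive, for each $h>0$ when $\kappa=1$, is part of the setting (it is guaranteed by a separate result). *)

theory Defs
  imports "HOL-Analysis.Analysis" "HOL-Library.Landau_Symbols"
begin

definition A_fun :: "complex \<Rightarrow> complex" where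
  "A_fun lam = exp (- \<i> * complex_of_real pi / 4) * complex_of_real (sqrt 2)
     * Gamma (3/4 - \<i> * lam / 2) / Gamma (1/4 - \<i> * lam / 2)"

definition real_pos :: "complex \<Rightarrow> bool" where
  "real_pos z \<longleftrightarrow> Im z = 0 \<and> Re z > 0"

end

theory Submission
  imports Defs
begin


definition fr :: "real \<Rightarrow> real \<Rightarrow> real" where "fr t u = t / (u^2 + t^2)"
definition fr1 :: "real \<Rightarrow> real \<Rightarrow> real" where "fr1 t u = - 2 * t * u / (u^2 + t^2)^2"
definition fr2 :: "real \<Rightarrow> real \<Rightarrow> real" where "fr2 t u = t * (6 * u^2 - 2 * t^2) / (u^2 + t^2)^3"

lemma deriv_F: assumes "t > 0" shows "DERIV (\<lambda>u. arctan (u / t)) u :> fr t u"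
proof -
  have "DERIV (\<lambda>u. arctan (u / t)) u :> 1 / (1 + (u/t)^2) * (1 / t)"
    using assms by (auto intro!: derivative_eq_intros simp: field_simps)
  also have "1 / (1 + (u/t)^2) * (1 / t) = fr t u"
    using assms by (simp add: fr_def field_simps power2_eq_square)
  finally show ?thesis .
qed

lemma deriv_fr: assumes "t > 0" shows "DERIV (fr t) u :> fr1 t u"
proof -
  have nz: "u^2 + t^2 \<noteq> 0" using assms by (smt (verit) power2_less_0 zero_less_power)
  have "DERIV (\<lambda>u. t / (u^2 + t^2)) u :> - (t * (2 * u)) / (u^2+t^2)^2"
    using nz by (auto intro!: derivative_eq_intros simp: power2_eq_square)
  thus ?thesis unfolding fr_def[abs_def] fr1_def by (simp add: field_simps)
qed

lemma deriv_fr1: assumes "t > 0" shows "DERIV (fr1 t) u :> fr2 t u"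
proof -
  have nz: "u^2 + t^2 \<noteq> 0" using assms by (smt (verit) power2_less_0 zero_less_power)
  have "DERIV (\<lambda>u. - 2 * t * u / (u^2 + t^2)^2) u :>
     ((- 2 * t) * (u^2 + t^2)^2 - (- 2 * t * u) * (2 * (u^2+t^2) * (2 * u))) / ((u^2 + t^2)^2)^2"
    using nz apply (intro derivative_eq_intros)
    apply (rule derivative_eq_intros refl)+
    apply (simp_all add: divide_simps)
    done
  also have "((- 2 * t) * (u^2 + t^2)^2 - (- 2 * t * u) * (2 * (u^2+t^2) * (2 * u))) / ((u^2 + t^2)^2)^2
     = fr2 t u"
    using nz unfolding fr2_def by (simp add: divide_simps) algebra
  finally show ?thesis unfolding fr1_def[abs_def] .
qed

lemma midpoint:
  assumes t: "t > 0"
  shows "\<exists>\<xi>1 \<xi>2. u < \<xi>1 \<and> \<xi>1 < u + 1/2 \<and> u - 1/2 < \<xi>2 \<and> \<xi>2 < u \<and>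
     arctan ((u + 1/2) / t) - arctan ((u - 1/2) / t) = fr t u + (fr2 t \<xi>1 + fr2 t \<xi>2) / 48"
proof -
  define diff where "diff = (\<lambda>m::nat. if m = 0 then (\<lambda>u. arctan (u / t)) else if m = 1 then fr t
      else if m = 2 then fr1 t else fr2 t)"
  have D: "\<forall>m x. m < 3 \<and> a \<le> x \<and> x \<le> b \<longrightarrow> DERIV (diff m) x :> diff (Suc m) x" for a b
  proof (intro allI impI)
    fix m x assume "m < (3::nat) \<and> a \<le> x \<and> x \<le> b"
    hence "m = 0 \<or> m = 1 \<or> m = 2" by auto
    thus "DERIV (diff m) x :> diff (Suc m) x"
      using deriv_F[OF t] deriv_fr[OF t] deriv_fr1[OF t] by (auto simp: diff_def)
  qed
  have d0: "diff 0 = (\<lambda>u. arctan (u / t))" by (simp add: diff_def)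
  obtain \<xi>1 where x1: "u < \<xi>1" "\<xi>1 < u + 1/2"
    "arctan ((u+1/2)/t) = (\<Sum>m<3. (diff m u / fact m) * ((u+1/2) - u)^m) + (diff 3 \<xi>1 / fact 3) * ((u+1/2) - u)^3"
    using Taylor_up[of 3 diff "\<lambda>u. arctan (u / t)" u "u+1/2" u, OF _ d0 D] by auto
  obtain \<xi>2 where x2: "u - 1/2 < \<xi>2" "\<xi>2 < u"
    "arctan ((u-1/2)/t) = (\<Sum>m<3. (diff m u / fact m) * ((u-1/2) - u)^m) + (diff 3 \<xi>2 / fact 3) * ((u-1/2) - u)^3"
    using Taylor_down[of 3 diff "\<lambda>u. arctan (u / t)" "u-1/2" u u, OF _ d0 D] by auto
  have e1: "arctan ((u+1/2)/t) = arctan (u/t) + fr t u / 2 + fr1 t u / 8 + fr2 t \<xi>1 / 48"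
    using x1(3) by (simp add: diff_def eval_nat_numeral fact_numeral power_numeral)
  have e2: "arctan ((u-1/2)/t) = arctan (u/t) - fr t u / 2 + fr1 t u / 8 - fr2 t \<xi>2 / 48"
    using x2(3) by (simp add: diff_def eval_nat_numeral fact_numeral power_numeral)
  show ?thesis using x1(1,2) x2(1,2) e1 e2 by (intro exI[of _ \<xi>1] exI[of _ \<xi>2]) auto
qed

lemma fr_pos: "t > 0 \<Longrightarrow> fr t u > 0"
  unfolding fr_def by (simp add: add_nonneg_pos)

lemma fr2_bound:
  assumes t: "t > 0" shows "\<bar>fr2 t x\<bar> \<le> 6 * fr t x / t^2"
proof -
  define D where "D = x^2 + t^2"
  have D: "D \<ge> t^2" "D > 0" using t by (auto simp: D_def add_nonneg_pos)
  have a: "\<bar>6 * x^2 - 2 * t^2\<bar> \<le> 6 * D" unfolding D_def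
    using zero_le_power2[of x] zero_le_power2[of t] by (simp add: abs_le_iff)
  have "\<bar>t * (6 * x^2 - 2 * t^2)\<bar> = t * \<bar>6 * x^2 - 2 * t^2\<bar>" using t by (simp add: abs_mult)
  also have "\<dots> \<le> t * (6 * D)" using a t by (intro mult_left_mono) auto
  finally have "\<bar>t * (6 * x^2 - 2 * t^2)\<bar> \<le> 6 * t * D" by simp
  hence "\<bar>fr2 t x\<bar> \<le> 6 * t * D / D^3"
    unfolding fr2_def D_def[symmetric] using D by (simp add: abs_divide divide_right_mono)
  also have "6 * t * D / D^3 = 6 * t / (D * D)" using D by (simp add: power3_eq_cube)
  also have "\<dots> \<le> 6 * t / (D * t^2)"
    using D t by (intro divide_left_mono mult_left_mono) (auto intro!: mult_pos_pos)
  also have "\<dots> = 6 * fr t x / t^2" unfolding fr_def D_def by simp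
  finally show ?thesis .
qed

lemma fr_compare:
  assumes t: "t \<ge> 1" and d: "\<bar>x - y\<bar> \<le> 1" shows "fr t x \<le> 3 * fr t y"
proof -
  have "y^2 \<le> 2 * x^2 + 2"
  proof -
    have "\<bar>y\<bar> \<le> \<bar>x\<bar> + 1" using d by linarith
    hence "y^2 \<le> (\<bar>x\<bar> + 1)^2" by (metis abs_ge_zero power2_abs power_mono)
    also have "\<dots> = 2 * x^2 + 2 - (\<bar>x\<bar> - 1)^2" by (simp add: power2_eq_square algebra_simps)
    also have "\<dots> \<le> 2 * x^2 + 2" by simp
    finally show ?thesis .
  qed
  moreover have "t^2 \<ge> 1" using t by (simp add: one_le_power)
  ultimately have le: "y^2 + t^2 \<le> 3 * (x^2 + t^2)" using zero_le_power2[of x]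
    unfolding distrib_left by linarith
  have pos: "x^2 + t^2 > 0" "y^2 + t^2 > 0" using t by (auto simp: add_nonneg_pos)
  have "t / (x^2 + t^2) \<le> 3 * t / (y^2 + t^2)"
    using le pos t by (simp add: divide_simps mult_left_mono)
  thus ?thesis by (simp add: fr_def)
qed

lemma E_bound:
  assumes t: "t \<ge> 1"
  shows "\<bar>arctan ((u + 1/2) / t) - arctan ((u - 1/2) / t) - fr t u\<bar>
     \<le> 3 / (4 * t^2) * (arctan ((u + 1/2) / t) - arctan ((u - 1/2) / t))"
proof -
  have t0: "t > 0" using t by simp
  obtain \<xi>1 \<xi>2 where x: "u < \<xi>1" "\<xi>1 < u + 1/2" "u - 1/2 < \<xi>2" "\<xi>2 < u"
    "arctan ((u + 1/2) / t) - arctan ((u - 1/2) / t) = fr t u + (fr2 t \<xi>1 + fr2 t \<xi>2) / 48"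
    using midpoint[OF t0] by blast
  obtain \<eta> where e: "u - 1/2 < \<eta>" "\<eta> < u + 1/2"
     "arctan ((u + 1/2) / t) - arctan ((u - 1/2) / t) = ((u+1/2) - (u-1/2)) * fr t \<eta>"
    using MVT2[of "u - 1/2" "u + 1/2" "\<lambda>u. arctan (u / t)" "fr t"] deriv_F[OF t0] by auto
  have c1: "fr t \<xi>1 \<le> 3 * fr t \<eta>" using x e by (intro fr_compare t) auto
  have c2: "fr t \<xi>2 \<le> 3 * fr t \<eta>" using x e by (intro fr_compare t) auto
  have "\<bar>(fr2 t \<xi>1 + fr2 t \<xi>2) / 48\<bar> \<le> (6 * fr t \<xi>1 / t^2 + 6 * fr t \<xi>2 / t^2) / 48"
    using fr2_bound[OF t0, of \<xi>1] fr2_bound[OF t0, of \<xi>2] by simp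
  also have "\<dots> = (fr t \<xi>1 + fr t \<xi>2) / (8 * t^2)" using t0 by (simp add: field_simps)
  also have "\<dots> \<le> (6 * fr t \<eta>) / (8 * t^2)"
    using c1 c2 t0 by (intro divide_right_mono) auto
  also have "\<dots> = 3 / (4 * t^2) * (arctan ((u + 1/2) / t) - arctan ((u - 1/2) / t))"
    using e(3) by simp
  finally show ?thesis using x(5) by simp
qed

lemma g_lim: assumes t: "t > 0"
  shows "(\<lambda>n. arctan ((x + real n - 1/2) / t)) \<longlonglongrightarrow> pi / 2"
proof -
  have "filterlim (\<lambda>n. (x + real n - 1/2) / t) at_top sequentially"
  proof -
    have "filterlim (\<lambda>n. (x - 1/2) / t + real n * (1/t)) at_top sequentially"
      using t by (intro filterlim_tendsto_add_at_top[OF tendsto_const]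
        filterlim_at_top_mult_tendsto_pos[OF tendsto_const] filterlim_real_sequentially) auto
    moreover have "(\<lambda>n. (x - 1/2) / t + real n * (1/t)) = (\<lambda>n. (x + real n - 1/2) / t)"
      using t by (auto simp: field_simps)
    ultimately show ?thesis by simp
  qed
  thus ?thesis by (rule filterlim_compose[OF tendsto_arctan_at_top])
qed

lemma S_est:
  assumes t: "t \<ge> 1"
  shows "summable (\<lambda>k. fr t (x + real k))"
    "\<bar>(\<Sum>k. fr t (x + real k)) - (pi/2 - arctan ((x - 1/2) / t))\<bar> \<le> 3 * pi / (4 * t^2)"
proof -
  have t0: "t > 0" using t by simp
  define g where "g n = arctan ((x + real n - 1/2) / t)" for n
  define T where "T n = g (Suc n) - g n" for n
  define E where "E n = T n - fr t (x + real n)" for n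
  define c where "c = 3 / (4 * t^2)"
  have Tsum: "T sums (pi/2 - g 0)" unfolding T_def using g_lim[OF t0] unfolding g_def[abs_def]
    by (intro telescope_sums) simp
  have Teq: "T n = arctan ((x + real n + 1/2) / t) - arctan ((x + real n - 1/2) / t)" for n
    unfolding T_def g_def by (simp add: algebra_simps)
  have Eb: "\<bar>E n\<bar> \<le> c * T n" for n
    using E_bound[OF t, of "x + real n"] unfolding E_def c_def Teq by simp
  have cpos: "c > 0" unfolding c_def using t0 by simp
  have Tnn: "T n \<ge> 0" for n
  proof -
    have "0 \<le> c * T n" using Eb[of n] abs_ge_zero order_trans by blast
    thus ?thesis using cpos by (simp add: zero_le_mult_iff)
  qed
  have cT: "(\<lambda>n. c * T n) sums (c * (pi/2 - g 0))" using Tsum by (rule sums_mult)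
  have sE: "summable (\<lambda>n. \<bar>E n\<bar>)"
    by (rule summable_comparison_test[OF _ sums_summable[OF cT]]) (use Eb in auto)
  have sE': "summable E" using sE by (rule summable_rabs_cancel)
  have fr_eq: "(\<lambda>k. fr t (x + real k)) = (\<lambda>n. T n - E n)" by (simp add: E_def)
  show "summable (\<lambda>k. fr t (x + real k))" unfolding fr_eq
    using Tsum sE' by (intro summable_diff) (auto simp: sums_iff)
  have "(\<Sum>k. fr t (x + real k)) = (pi/2 - g 0) - (\<Sum>n. E n)"
  proof -
    have "(\<Sum>n. T n - E n) = suminf T - suminf E"
      using sums_summable[OF Tsum] sE' by (rule suminf_diff[symmetric])
    thus ?thesis unfolding fr_eq using Tsum by (simp add: sums_iff)
  qed
  moreover have "\<bar>\<Sum>n. E n\<bar> \<le> c * (pi/2 - g 0)"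
  proof -
    have "\<bar>\<Sum>n. E n\<bar> \<le> (\<Sum>n. \<bar>E n\<bar>)" using sE by (rule summable_rabs)
    also have "\<dots> \<le> (\<Sum>n. c * T n)" using sE sums_summable[OF cT] Eb by (intro suminf_le) auto
    finally show ?thesis using cT by (simp add: sums_iff)
  qed
  moreover have "pi/2 - g 0 \<le> pi" unfolding g_def using arctan_lbound[of "(x + real 0 - 1/2) / t"] by simp
  moreover have "c * (pi/2 - g 0) \<le> c * pi" using calculation(3) cpos by (intro mult_left_mono) auto
  ultimately have "\<bar>(\<Sum>k. fr t (x + real k)) - (pi/2 - g 0)\<bar> \<le> c * pi"
    by linarith
  thus "\<bar>(\<Sum>k. fr t (x + real k)) - (pi/2 - arctan ((x - 1/2) / t))\<bar> \<le> 3 * pi / (4 * t^2)"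
    unfolding g_def c_def by simp
qed



lemma not_nonpos_Reals: "Im z \<noteq> 0 \<Longrightarrow> z \<notin> \<real>\<^sub>\<le>\<^sub>0"
  by (simp add: complex_nonpos_Reals_iff)

lemma not_nonpos_Ints: "Im z \<noteq> 0 \<Longrightarrow> (z::complex) \<notin> \<int>\<^sub>\<le>\<^sub>0"
  using not_nonpos_Reals nonpos_Ints_subset_nonpos_Reals by blast

lemma Im_Digamma:
  assumes t: "t > 0"
  shows "Im (Digamma (Complex x t)) = (\<Sum>k. fr t (x + real k))"
proof -
  define z where "z = Complex x t"
  have z0: "z \<noteq> 0" using t by (auto simp: z_def complex_eq_iff)
  have sm: "summable (\<lambda>n. inverse (of_nat (Suc n)) - inverse (z + of_nat n))"
    by (rule summable_Digamma[OF z0])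
  have "Im (Digamma z) = Im (\<Sum>n. inverse (of_nat (Suc n)) - inverse (z + of_nat n))"
  proof -
    have "Im (euler_mascheroni :: complex) = 0"
      by (metis Im_complex_of_real of_real_euler_mascheroni)
    thus ?thesis by (simp add: Digamma_def)
  qed
  also have "\<dots> = (\<Sum>n. Im (inverse (of_nat (Suc n)) - inverse (z + of_nat n)))"
    using Im_suminf[OF sm] .
  also have "(\<lambda>n. Im (inverse (of_nat (Suc n)) - inverse (z + of_nat n))) = (\<lambda>k. fr t (x + real k))"
    by (auto simp: z_def fr_def add_ac)
  finally show ?thesis by (simp add: z_def)
qed

lemma phi_deriv:
  assumes t: "t > 0"
  shows "((\<lambda>x. Im (ln_Gamma (Complex x t))) has_real_derivative (\<Sum>k. fr t (x + real k))) (at x)"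
proof -
  have Df: "((\<lambda>x. Complex x t) has_vector_derivative 1) (at x)"
  proof -
    have "((\<lambda>x. of_real x + \<i> * of_real t) has_vector_derivative (1::complex)) (at x)"
      by (auto intro!: derivative_eq_intros)
    moreover have "(\<lambda>x. of_real x + \<i> * of_real t) = (\<lambda>x. Complex x t)"
      by (auto simp: complex_eq_iff)
    ultimately show ?thesis by simp
  qed
  have Dg: "(ln_Gamma has_field_derivative Digamma (Complex x t)) (at (Complex x t))"
    using t by (intro has_field_derivative_ln_Gamma_complex not_nonpos_Reals) simp
  have "((ln_Gamma \<circ> (\<lambda>x. Complex x t)) has_vector_derivative (1 * Digamma (Complex x t))) (at x)"
    by (rule field_vector_diff_chain_at[OF Df Dg])
  hence "((\<lambda>x. Im ((ln_Gamma \<circ> (\<lambda>x. Complex x t)) x)) has_field_derivative Im (1 * Digamma (Complex x t))) (at x)"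
    by (rule has_field_derivative_Im)
  thus ?thesis using Im_Digamma[OF t] by (simp add: o_def)
qed

lemma star:
  assumes h: "h > 0"
    and pos: "real_pos (A_fun (complex_of_real (- 1 / h) - \<i> * complex_of_real \<sigma>))"
  defines "s \<equiv> \<sigma> / 2" and "t \<equiv> 1 / (2 * h)"
  defines "\<theta> \<equiv> Im (ln_Gamma (Complex (3/4 + s) t)) - Im (ln_Gamma (Complex (3/4 - s) t))"
  shows "sin (pi * s - \<theta>) = exp (- 2 * pi * t) * cos (pi * s + \<theta>)"
proof -
  have t: "t > 0" using h by (simp add: t_def)
  define z0 where "z0 = Complex (1/4 - s) t"
  define z1 where "z1 = Complex (3/4 - s) t"
  define z2 where "z2 = Complex (3/4 + s) t"
  define L1 where "L1 = ln_Gamma z1"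
  define L2 where "L2 = ln_Gamma z2"
  define W where "W = sin (of_real pi * z0)"
  have e1: "3/4 - \<i> * (complex_of_real (- 1 / h) - \<i> * complex_of_real \<sigma>) / 2 = z1"
    using h by (simp add: complex_eq_iff z1_def s_def t_def)
  have e0: "1/4 - \<i> * (complex_of_real (- 1 / h) - \<i> * complex_of_real \<sigma>) / 2 = z0"
    using h by (simp add: complex_eq_iff z0_def s_def t_def)
  have nz0: "z0 \<notin> \<int>\<^sub>\<le>\<^sub>0" "z1 \<notin> \<int>\<^sub>\<le>\<^sub>0"
    using t by (auto intro!: not_nonpos_Ints simp: z0_def z1_def)
  have G1: "Gamma z1 = exp L1" using nz0 by (simp add: Gamma_complex_altdef L1_def)
  have nz2: "z2 \<notin> \<int>\<^sub>\<le>\<^sub>0" using t by (auto intro!: not_nonpos_Ints simp: z2_def)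
  have c2: "1 - z0 = cnj z2" by (simp add: complex_eq_iff z0_def z2_def)
  have G2: "Gamma (1 - z0) = exp (cnj L2)"
    unfolding c2 cnj_Gamma[symmetric] using nz2 by (simp add: Gamma_complex_altdef L2_def exp_cnj)
  have refl: "Gamma z0 * Gamma (1 - z0) = of_real pi / W"
    unfolding W_def by (rule Gamma_reflection_complex)
  have g0: "Gamma z0 \<noteq> 0" using nz0 by (simp add: Gamma_eq_zero_iff)
  have Wnz: "W \<noteq> 0"
  proof
    assume "W = 0"
    hence "Gamma z0 * Gamma (1 - z0) = 0" using refl by simp
    thus False using g0 G2 by simp
  qed
  have inv: "1 / Gamma z0 = Gamma (1 - z0) * W / of_real pi"
    using refl g0 Wnz by (simp add: field_simps)
  define w where "w = L1 + cnj L2"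
  have Imw: "Im w = - \<theta>" by (simp add: w_def \<theta>_def L1_def L2_def z1_def z2_def)
  define \<alpha> where "\<alpha> = pi / 4 + \<theta>"
  define R where "R = sqrt 2 * exp (Re w) / pi"
  have Rpos: "R > 0" by (simp add: R_def)
  have A_eq: "A_fun (complex_of_real (- 1 / h) - \<i> * complex_of_real \<sigma>) = of_real R * (cis (- \<alpha>) * W)"
  proof -
    have "A_fun (complex_of_real (- 1 / h) - \<i> * complex_of_real \<sigma>) =
       exp (- \<i> * complex_of_real pi / 4) * complex_of_real (sqrt 2) * Gamma z1 * (1 / Gamma z0)"
      unfolding A_fun_def e1 e0 by simp
    also have "\<dots> = exp (- \<i> * complex_of_real pi / 4) * complex_of_real (sqrt 2) * (exp L1 * exp (cnj L2)) * W / of_real pi"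
      unfolding inv G1 G2 by simp
    also have "exp L1 * exp (cnj L2) = exp w" by (simp add: w_def exp_add)
    also have "exp w = of_real (exp (Re w)) * cis (Im w)" by (rule exp_eq_polar)
    also have "exp (- \<i> * complex_of_real pi / 4) = cis (- pi / 4)"
      by (simp add: cis_conv_exp)
    also have "cis (- pi / 4) * complex_of_real (sqrt 2) * (of_real (exp (Re w)) * cis (Im w)) * W / of_real pi
        = of_real R * ((cis (- pi / 4) * cis (Im w)) * W)"
      by (simp add: R_def field_simps)
    also have "cis (- pi / 4) * cis (Im w) = cis (- \<alpha>)" by (simp add: cis_mult Imw \<alpha>_def)
    finally show ?thesis .
  qed
  have "Im (cis (- \<alpha>) * W) = 0"
    using pos Rpos unfolding A_eq real_pos_def by simp
  hence eq: "cos \<alpha> * Im W - sin \<alpha> * Re W = 0" by simp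
  define P where "P = exp (pi * t)"
  define Q where "Q = exp (- (pi * t))"
  have ReW: "Re W = sin (pi * (1/4 - s)) * (P + Q) / 2"
    by (simp add: W_def Re_sin z0_def P_def Q_def)
  have ImW: "Im W = cos (pi * (1/4 - s)) * (P - Q) / 2"
    by (simp add: W_def Im_sin z0_def P_def Q_def)
  have "P * (cos \<alpha> * cos (pi * (1/4 - s)) - sin \<alpha> * sin (pi * (1/4 - s)))
      = Q * (cos \<alpha> * cos (pi * (1/4 - s)) + sin \<alpha> * sin (pi * (1/4 - s)))"
    using eq unfolding ReW ImW by (simp add: algebra_simps)
  hence "P * cos (\<alpha> + pi * (1/4 - s)) = Q * cos (\<alpha> - pi * (1/4 - s))"
    by (simp add: cos_add cos_diff)
  moreover have "\<alpha> + pi * (1/4 - s) = pi / 2 - (pi * s - \<theta>)" by (simp add: \<alpha>_def algebra_simps)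
  moreover have "\<alpha> - pi * (1/4 - s) = pi * s + \<theta>" by (simp add: \<alpha>_def algebra_simps)
  ultimately have "P * sin (pi * s - \<theta>) = Q * cos (pi * s + \<theta>)"
    by (simp add: cos_diff)
  moreover have "Q / P = exp (- 2 * pi * t)" by (simp add: P_def Q_def flip: exp_diff)
  moreover have "P > 0" by (simp add: P_def)
  ultimately show ?thesis by (simp add: field_simps)
qed



lemma arctan_cubic:
  assumes "\<bar>y\<bar> < 1" shows "\<bar>arctan y - y\<bar> \<le> \<bar>y\<bar>^3"
proof -
  have *: "\<bar>arctan y - y\<bar> \<le> y^3" if "0 \<le> y" "y < 1" for y :: real
  proof -
    have lo: "(\<Sum>k<2 * 1. (- 1) ^ k * (1 / real (k * 2 + 1) * y ^ (k * 2 + 1))) \<le> arctan y"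
      by (rule arctan_lower_bound) (use that in auto)
    have up: "arctan y \<le> (\<Sum>k<2 * 0 + 1. (- 1) ^ k * (1 / real (k * 2 + 1) * y ^ (k * 2 + 1)))"
      by (rule arctan_upper_bound) (use that in auto)
    have lo': "y - y^3 / 3 \<le> arctan y" using lo by (simp add: eval_nat_numeral)
    have up': "arctan y \<le> y" using up by simp
    have "0 \<le> y^3" using that by simp
    thus ?thesis using lo' up' by (simp add: abs_le_iff)
  qed
  show ?thesis
  proof (cases "y \<ge> 0")
    case True thus ?thesis using *[of y] assms by simp
  next
    case False
    hence "\<bar>arctan (-y) - (-y)\<bar> \<le> (-y)^3" using *[of "-y"] assms by simp
    thus ?thesis using False by (simp add: arctan_minus abs_minus_commute)
  qed
qed

lemma Dprime_bound:
  assumes t: "t \<ge> 1" and x: "1/4 \<le> x" "x \<le> 5/4"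
  shows "\<bar>(\<Sum>k. fr t (x + real k)) - (pi/2 - (x - 1/2) / t)\<bar> \<le> 4 / t^2"
proof -
  have t0: "t > 0" using t by simp
  have "\<bar>x - 1/2\<bar> \<le> 3/4" using x unfolding abs_le_iff by linarith
  hence y: "\<bar>(x - 1/2) / t\<bar> \<le> 3 / (4 * t)" using t0 by (simp add: abs_divide pos_divide_le_eq)
  have "3 / (4 * t) \<le> 3 / 4" using t by (intro divide_left_mono) auto
  hence y1: "\<bar>(x - 1/2) / t\<bar> < 1" using y by linarith
  have "\<bar>arctan ((x - 1/2) / t) - (x - 1/2) / t\<bar> \<le> \<bar>(x - 1/2) / t\<bar>^3"
    by (rule arctan_cubic[OF y1])
  also have "\<dots> \<le> (3 / (4 * t))^3" by (rule power_mono[OF y]) simp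
  also have "\<dots> = 27 / (64 * t^3)" by (simp add: power_divide eval_nat_numeral)
  also have "\<dots> \<le> 1 / t^2"
  proof -
    have "t^2 \<le> t^3" using t by (simp add: power_increasing)
    moreover have "0 \<le> t^2" by simp
    ultimately have "27 * t^2 \<le> 64 * t^3" by linarith
    thus ?thesis using t0 by (simp add: divide_simps)
  qed
  finally have a: "\<bar>arctan ((x - 1/2) / t) - (x - 1/2) / t\<bar> \<le> 1 / t^2" .
  have b: "\<bar>(\<Sum>k. fr t (x + real k)) - (pi/2 - arctan ((x - 1/2) / t))\<bar> \<le> 3 * pi / (4 * t^2)"
    by (rule S_est(2)[OF t])
  have "3 * pi / (4 * t^2) + 1 / t^2 \<le> 4 / t^2"
    using pi_less_4 t0 by (simp add: divide_simps)
  thus ?thesis using a b by linarith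
qed

definition M0 :: real where "M0 = (\<Sum>n. inverse (real (Suc n) ^ 2))"

lemma M0_summable: "summable (\<lambda>n. inverse (real (Suc n) ^ 2))"
  using inverse_power_summable[of 2, where 'a=real] summable_Suc_iff[of "\<lambda>n. inverse (real n ^ 2)"]
  by simp

lemma S_small:
  assumes t: "t > 0" and x: "x \<ge> 1/4"
  shows "0 \<le> (\<Sum>k. fr t (x + real k))" "(\<Sum>k. fr t (x + real k)) \<le> 16 * t * M0"
proof -
  have b: "fr t (x + real k) \<le> 16 * t * inverse (real (Suc k) ^ 2)" for k
  proof -
    have p: "x + real k > 0" using x by linarith
    have "real (Suc k) \<le> 4 * (x + real k)" using x by simp
    hence "real (Suc k) ^ 2 \<le> (4 * (x + real k)) ^ 2" by (intro power_mono) auto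
    moreover have "(4 * (x + real k)) ^ 2 = 16 * (x + real k) ^ 2" by (simp add: power2_eq_square algebra_simps)
    ultimately have le: "real (Suc k) ^ 2 \<le> 16 * (x + real k) ^ 2" by simp
    have "fr t (x + real k) \<le> t / (x + real k) ^ 2"
      unfolding fr_def using t p by (intro divide_left_mono) (auto intro!: mult_pos_pos add_nonneg_pos)
    also have "\<dots> \<le> 16 * t / real (Suc k) ^ 2"
      using le t p by (simp add: divide_simps)
    finally show ?thesis by (simp add: field_simps)
  qed
  have nn: "fr t (x + real k) \<ge> 0" for k using fr_pos[OF t] less_imp_le by blast
  have sm2: "summable (\<lambda>k. 16 * t * inverse (real (Suc k) ^ 2))"
    using M0_summable by (rule summable_mult)
  have sm: "summable (\<lambda>k. fr t (x + real k))"
    by (rule summable_comparison_test[OF _ sm2]) (use b nn in auto)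
  show "0 \<le> (\<Sum>k. fr t (x + real k))" using sm nn by (intro suminf_nonneg) auto
  have "(\<Sum>k. fr t (x + real k)) \<le> (\<Sum>k. 16 * t * inverse (real (Suc k) ^ 2))"
    using sm sm2 b by (intro suminf_le) auto
  also have "\<dots> = 16 * t * M0" unfolding M0_def using suminf_mult[OF M0_summable, of "16 * t"] by simp
  finally show "(\<Sum>k. fr t (x + real k)) \<le> 16 * t * M0" .
qed

lemma M0_nonneg: "M0 \<ge> 0"
  unfolding M0_def using M0_summable by (intro suminf_nonneg) auto

lemma theta_small:
  assumes t: "t > 0" and s: "0 < s" "s \<le> 1/2"
  shows "\<bar>Im (ln_Gamma (Complex (3/4 + s) t)) - Im (ln_Gamma (Complex (3/4 - s) t))\<bar> \<le> 16 * t * M0"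
proof -
  obtain \<xi> where xi: "3/4 - s < \<xi>" "\<xi> < 3/4 + s"
    "Im (ln_Gamma (Complex (3/4 + s) t)) - Im (ln_Gamma (Complex (3/4 - s) t))
       = ((3/4 + s) - (3/4 - s)) * (\<Sum>k. fr t (\<xi> + real k))"
    using MVT2[of "3/4 - s" "3/4 + s" "\<lambda>x. Im (ln_Gamma (Complex x t))" "\<lambda>x. \<Sum>k. fr t (x + real k)"]
      phi_deriv[OF t] s by auto
  have x: "\<xi> \<ge> 1/4" using xi s by linarith
  have "\<bar>(2 * s) * (\<Sum>k. fr t (\<xi> + real k))\<bar> = (2 * s) * (\<Sum>k. fr t (\<xi> + real k))"
    using S_small(1)[OF t x] s by simp
  also have "\<dots> \<le> 1 * (16 * t * M0)"
    using S_small[OF t x] s by (intro mult_mono) auto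
  finally show ?thesis using xi(3) by simp
qed

lemma theta_large:
  assumes t: "t \<ge> 1" and s: "0 < s" "s \<le> 1/2"
  shows "\<bar>(Im (ln_Gamma (Complex (3/4 + s) t)) - Im (ln_Gamma (Complex (3/4 - s) t))) - (pi * s - s / (2 * t))\<bar>
      \<le> 8 * s / t^2"
proof -
  have t0: "t > 0" using t by simp
  define D where "D x = Im (ln_Gamma (Complex x t)) - (pi / 2 * x - (x - 1/2)^2 / (2 * t))" for x
  define D' where "D' x = (\<Sum>k. fr t (x + real k)) - (pi / 2 - (x - 1/2) / t)" for x
  have dD: "DERIV D x :> D' x" for x
  proof -
    have "DERIV D x :> (\<Sum>k. fr t (x + real k)) - (pi / 2 * 1 - (2 * (x - 1/2) * 1) / (2 * t))"
      unfolding D_def[abs_def]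
      apply (intro derivative_intros phi_deriv[OF t0])
      apply (auto intro!: derivative_eq_intros)
      using t0 apply (simp_all add: field_simps)
      done
    moreover have "(\<Sum>k. fr t (x + real k)) - (pi / 2 * 1 - (2 * (x - 1/2) * 1) / (2 * t)) = D' x"
      unfolding D'_def using t0 by (simp add: field_simps)
    ultimately show ?thesis by simp
  qed
  obtain \<xi> where xi: "3/4 - s < \<xi>" "\<xi> < 3/4 + s" "D (3/4 + s) - D (3/4 - s) = ((3/4 + s) - (3/4 - s)) * D' \<xi>"
    using MVT2[of "3/4 - s" "3/4 + s" D D'] dD s by auto
  have b: "\<bar>D' \<xi>\<bar> \<le> 4 / t^2" unfolding D'_def using xi s by (intro Dprime_bound t) auto
  have "D (3/4 + s) - D (3/4 - s) =
     (Im (ln_Gamma (Complex (3/4 + s) t)) - Im (ln_Gamma (Complex (3/4 - s) t))) - (pi * s - s / (2 * t))"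
    unfolding D_def using t0 by (simp add: field_simps power2_eq_square)
  hence "\<bar>(Im (ln_Gamma (Complex (3/4 + s) t)) - Im (ln_Gamma (Complex (3/4 - s) t))) - (pi * s - s / (2 * t))\<bar>
     = \<bar>(2 * s) * D' \<xi>\<bar>" using xi(3) s by simp
  also have "\<dots> = (2 * s) * \<bar>D' \<xi>\<bar>" using s by (simp add: abs_mult)
  also have "\<dots> \<le> (2 * s) * (4 / t^2)" using b s by (intro mult_left_mono) auto
  finally show ?thesis by simp
qed



lemma sin_lip: fixes x y :: real shows "\<bar>sin x - sin y\<bar> \<le> \<bar>x - y\<bar>"
proof -
  have "\<bar>sin x - sin y\<bar> = 2 * \<bar>sin ((x - y) / 2)\<bar> * \<bar>cos ((x + y) / 2)\<bar>"
    by (simp add: sin_diff_sin abs_mult)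
  also have "\<dots> \<le> 2 * \<bar>(x - y) / 2\<bar> * 1"
    by (intro mult_mono abs_sin_x_le_abs_x) auto
  finally show ?thesis by simp
qed

lemma cos_lip: fixes x y :: real shows "\<bar>cos x - cos y\<bar> \<le> \<bar>x - y\<bar>"
proof -
  have "\<bar>cos x - cos y\<bar> = 2 * \<bar>sin ((x + y) / 2)\<bar> * \<bar>sin ((y - x) / 2)\<bar>"
    by (simp add: cos_diff_cos abs_mult)
  also have "\<dots> \<le> 2 * 1 * \<bar>(y - x) / 2\<bar>"
    by (intro mult_mono abs_sin_x_le_abs_x) auto
  finally show ?thesis by simp
qed

lemma sin_cubic: fixes x :: real shows "\<bar>sin x - x\<bar> \<le> \<bar>x\<bar>^3 / 6"
proof -
  have "\<bar>sin x - (\<Sum>m<3. sin_coeff m * x ^ m)\<bar> \<le> inverse (fact 3) * \<bar>x\<bar> ^ 3"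
    by (rule Maclaurin_sin_bound)
  thus ?thesis by (simp add: eval_nat_numeral sin_coeff_def fact_numeral)
qed

lemma cos_quad: fixes x :: real shows "\<bar>cos x - 1\<bar> \<le> x^2 / 2"
proof -
  have "cos x = 1 - 2 * (sin (x/2))^2" using cos_double_sin[of "x/2"] by simp
  moreover have "(sin (x/2))^2 \<le> (x/2)^2"
    using abs_sin_x_le_abs_x[of "x/2"] by (metis abs_ge_zero power2_abs power_mono)
  ultimately show ?thesis by (simp add: power_divide)
qed

lemma exp_neg_quad: fixes x :: real
  assumes "x \<ge> 0" shows "exp (- x) \<le> 1 - x + x^2 / 2"
proof -
  define f where "f y = 1 - y + y^2 / 2 - exp (- y)" for y :: real
  have d: "DERIV f y :> (- 1 + y + exp (- y))" for y
    unfolding f_def[abs_def] by (auto intro!: derivative_eq_intros)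
  have "f 0 \<le> f x"
  proof (cases "x = 0")
    case False
    hence "0 < x" using assms by simp
    then obtain z where z: "0 < z" "z < x" "f x - f 0 = (x - 0) * (- 1 + z + exp (- z))"
      using MVT2[of 0 x f "\<lambda>y. - 1 + y + exp (- y)"] d by blast
    have "- 1 + z + exp (- z) \<ge> 0" using exp_ge_add_one_self[of "- z"] by simp
    hence "0 \<le> x * (- 1 + z + exp (- z))" using \<open>0 < x\<close> by simp
    thus ?thesis using z by simp
  qed simp
  thus ?thesis by (simp add: f_def)
qed

lemma exp_sq: fixes x :: real assumes "x \<ge> 0" shows "(x/2)^2 \<le> exp x"
proof -
  have "x/2 \<le> exp (x/2)" using exp_ge_add_one_self[of "x/2"] by linarith
  hence "(x/2)^2 \<le> (exp (x/2))^2" using assms by (intro power_mono) auto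
  also have "\<dots> = exp x" by (simp flip: exp_double)
  finally show ?thesis .
qed



lemma small_regime:
  fixes t s \<theta> :: real
  assumes t: "t \<ge> 32" and s: "0 < s" "s \<le> 1/2"
    and th: "\<bar>\<theta> - (pi * s - s / (2 * t))\<bar> \<le> 8 * s / t^2"
    and eq: "sin (pi * s - \<theta>) = exp (- 2 * pi * t) * cos (pi * s + \<theta>)"
  shows "\<bar>s / (2 * t * exp (- 2 * pi * t)) - 1\<bar> \<le> 3000 / t"
proof -
  define E where "E = exp (- 2 * pi * t)"
  define \<delta> where "\<delta> = pi * s - \<theta>"
  define c where "c = cos (pi * s + \<theta>)"
  have t0: "t > 0" using t by simp
  have Epos: "E > 0" by (simp add: E_def)
  have b1: "8 * s / t^2 \<le> s / (4 * t)"
  proof -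
    have "8 * s * (4 * t) \<le> s * t^2"
      using t s by (simp add: power2_eq_square mult_right_mono)
    thus ?thesis using t0 by (simp add: divide_simps)
  qed
  have d1: "\<bar>\<delta> - s / (2 * t)\<bar> \<le> 8 * s / t^2" using th by (simp add: \<delta>_def abs_minus_commute)
  have dlo: "\<delta> \<ge> s / (4 * t)" using d1 b1 by (simp add: abs_le_iff field_simps) 
  have dhi: "\<delta> \<le> 3 * s / (4 * t)" using d1 b1 by (simp add: abs_le_iff field_simps)
  have dpos: "\<delta> > 0" using dlo s t0 by (smt (verit) divide_pos_pos)
  have d_le1: "\<delta> \<le> 1"
  proof -
    have "3 * s / (4 * t) \<le> 1" using s t by (simp add: divide_simps)
    thus ?thesis using dhi by linarith
  qed
  have sc: "\<bar>sin \<delta> - \<delta>\<bar> \<le> \<delta>^3 / 6" using sin_cubic[of \<delta>] dpos by simp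
  have d3: "\<delta>^3 \<le> \<delta>" using dpos d_le1 by (simp add: power_le_one power3_eq_cube mult_le_one)
  have sinlo: "sin \<delta> \<ge> \<delta> / 2" using sc d3 unfolding abs_le_iff by linarith
  have eq': "sin \<delta> = E * c" using eq by (simp add: E_def \<delta>_def c_def)
  have "E * c \<le> E" using Epos by (simp add: c_def)
  hence sinE: "sin \<delta> \<le> E" using eq' by simp
  have sE: "s \<le> 8 * t * E"
  proof -
    have "s / (4 * t) \<le> 2 * E" using dlo sinlo sinE by linarith
    thus ?thesis using t0 by (simp add: divide_simps mult_ac)
  qed
  have exp_big: "t^2 \<le> exp (2 * pi * t)"
  proof -
    have "(2 * pi * t / 2)^2 \<le> exp (2 * pi * t)" using t0 by (intro exp_sq) simp
    moreover have "t^2 \<le> (2 * pi * t / 2)^2"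
      using t0 pi_gt3 by (intro power_mono) auto
    ultimately show ?thesis by linarith
  qed
  have E_eq: "E = 1 / exp (2 * pi * t)" by (simp add: E_def exp_minus field_simps)
  have Et2: "t^2 * E \<le> 1" using exp_big unfolding E_eq using t0 by (simp add: divide_simps)
  have Et: "t * E \<le> 1"
  proof -
    have "t * E \<le> t^2 * E" using t Epos by (simp add: power2_eq_square)
    thus ?thesis using Et2 by linarith
  qed
  have E1: "E \<le> 1" using Et t Epos by (smt (verit) mult_le_cancel_right1)
  have Eovt: "E \<le> 1 / t" using Et t0 by (simp add: divide_simps mult_ac)
  have T1: "\<bar>s / (2 * t) - \<delta>\<bar> \<le> 64 * E / t"
  proof -
    have "8 * s \<le> 8 * (8 * t * E)" using sE by linarith
    hence "8 * s / t^2 \<le> 8 * (8 * t * E) / t^2" by (rule divide_right_mono) simp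
    also have "\<dots> = 64 * E / t" using t0 by (simp add: power2_eq_square)
    finally show ?thesis using d1 by (simp add: abs_minus_commute)
  qed
  have T2: "\<bar>\<delta> - sin \<delta>\<bar> \<le> 512 * E / t"
  proof -
    have "0 \<le> \<delta>^3" using dpos by simp
    hence "\<bar>\<delta> - sin \<delta>\<bar> \<le> \<delta>^3" using sc abs_minus_commute[of "sin \<delta>" \<delta>] by linarith
    also have "\<delta> \<le> 8 * E"
    proof -
      have "3 * s / (4 * t) \<le> s / t" using s t0 by (simp add: divide_simps)
      also have "\<dots> \<le> 8 * E" using sE t0 by (simp add: divide_simps mult_ac)
      finally show ?thesis using dhi by linarith
    qed
    hence "\<delta>^3 \<le> (8 * E)^3" using dpos by (intro power_mono) auto
    also have "(8 * E)^3 = 512 * E * (E * E)" by (simp add: power3_eq_cube)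
    also have "\<dots> \<le> 512 * E * (1 * (1 / t))"
      using Epos E1 Eovt by (intro mult_left_mono mult_mono) auto
    finally show ?thesis by simp
  qed
  have T3: "\<bar>E * (c - 1)\<bar> \<le> 2048 * E / t"
  proof -
    have "pi * s + \<theta> = 2 * pi * s - \<delta>" by (simp add: \<delta>_def)
    moreover have "\<delta> \<le> 2 * pi * s"
    proof -
      have "3 * 32 \<le> pi * t" using pi_gt3 t by (intro mult_mono) auto
      hence "3 \<le> 8 * (pi * t)" by linarith
      hence "3 * s \<le> 8 * (pi * t) * s" using s by (intro mult_right_mono) auto
      hence "3 * s / (4 * t) \<le> 2 * pi * s" using t0 by (simp add: divide_simps mult_ac)
      thus ?thesis using dhi by linarith
    qed
    ultimately have "\<bar>pi * s + \<theta>\<bar> \<le> 2 * pi * s" using dpos by (simp add: abs_le_iff)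
    hence "(pi * s + \<theta>)^2 \<le> (2 * pi * s)^2" by (metis abs_ge_zero power2_abs power_mono)
    hence "\<bar>c - 1\<bar> \<le> (2 * pi * s)^2 / 2" using cos_quad[of "pi * s + \<theta>"] unfolding c_def by linarith
    also have "(2 * pi * s)^2 / 2 = 2 * pi^2 * s^2" by (simp add: power_mult_distrib)
    also have "\<dots> \<le> 2 * pi^2 * (8 * t * E)^2" using sE s by (intro mult_left_mono power_mono) auto
    also have "\<dots> = 128 * pi^2 * (t^2 * E) * E" by (simp add: power_mult_distrib power2_eq_square)
    also have "\<dots> \<le> 128 * pi^2 * 1 * (1 / t)" using Et2 Eovt Epos by (intro mult_mono) auto
    also have "\<dots> \<le> 2048 * (1 / t)"
    proof -
      have "pi^2 \<le> 4^2" using pi_less_4 by (intro power_mono) auto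
      hence "128 * pi^2 \<le> 2048" by simp
      thus ?thesis using t0 by (intro mult_right_mono) auto
    qed
    finally have "\<bar>c - 1\<bar> \<le> 2048 / t" by simp
    hence "E * \<bar>c - 1\<bar> \<le> E * (2048 / t)" using Epos by (intro mult_left_mono) auto
    thus ?thesis using Epos by (simp add: abs_mult mult_ac)
  qed
  have "s / (2 * t) - E = (s / (2 * t) - \<delta>) + (\<delta> - sin \<delta>) + E * (c - 1)"
    using eq' by (simp add: algebra_simps)
  hence "\<bar>s / (2 * t) - E\<bar> \<le> 64 * E / t + 512 * E / t + 2048 * E / t"
    using T1 T2 T3 by linarith
  also have "\<dots> \<le> 3000 * E / t" using Epos t0 by (simp add: divide_simps)
  finally have main: "\<bar>s / (2 * t) - E\<bar> \<le> 3000 * E / t" .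
  have "s / (2 * t * E) - 1 = (s / (2 * t) - E) / E" using Epos t0 by (simp add: field_simps)
  hence "\<bar>s / (2 * t * E) - 1\<bar> = \<bar>s / (2 * t) - E\<bar> / E" using Epos by simp
  also have "\<dots> \<le> (3000 * E / t) / E" using main Epos by (intro divide_right_mono) auto
  also have "\<dots> = 3000 / t" using Epos by simp
  finally show ?thesis by (simp add: E_def)
qed

lemma decomp_aux:
  fixes x q y A B C D :: real
  assumes "2 * A * B = C * D"
  shows "x * (q - y / 2) = x * (q - B) + (x - 2 * A) * B + C * (D - x / 2) + (x / 2) * (C - y)"
  using assms by (simp add: field_simps)

lemma large_regime:
  fixes t s \<theta> K :: real
  assumes t: "0 < t" "t \<le> 1" and K: "K \<ge> 0" "K * t \<le> 1/10" and s: "0 < s" "s < 1/2"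
    and th: "\<bar>\<theta>\<bar> \<le> K * t"
    and eq: "sin (pi * s - \<theta>) = exp (- 2 * pi * t) * cos (pi * s + \<theta>)"
  shows "\<bar>2 * s - 1/2 + 2 * t\<bar> \<le> (3200 + 48 * K) * t^2"
proof -
  define a where "a = 1/4 - s"
  define q where "q = pi * a"
  define p where "p = pi / 4 + \<theta>"
  define E where "E = exp (- 2 * pi * t)"
  have pi4: "pi \<le> 4" using pi_less_4 by simp
  have qb: "\<bar>q\<bar> \<le> 1"
  proof -
    have "\<bar>a\<bar> \<le> 1/4" using s unfolding a_def abs_le_iff by linarith
    hence "pi * \<bar>a\<bar> \<le> 4 * (1/4)" using pi4 by (intro mult_mono) auto
    thus ?thesis by (simp add: q_def abs_mult)
  qed
  have e1: "pi * s - \<theta> = pi / 2 - (p + q)" by (simp add: p_def q_def a_def algebra_simps)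
  have e2: "pi * s + \<theta> = p - q" by (simp add: p_def q_def a_def algebra_simps)
  have "cos (p + q) = E * cos (p - q)" using eq unfolding e1 e2 E_def by (simp add: sin_diff)
  hence ident: "2 * sin p * sin q = (1 - E) * cos (p - q)"
    by (simp add: cos_add cos_diff algebra_simps)
  have Epos: "E > 0" by (simp add: E_def)
  have Elo: "1 - 2 * pi * t \<le> E" using exp_ge_add_one_self[of "- 2 * pi * t"] by (simp add: E_def)
  have Ehi: "E \<le> 1 - 2 * pi * t + (2 * pi * t)^2 / 2"
    using exp_neg_quad[of "2 * pi * t"] t by (simp add: E_def)
  have pt: "pi * t \<le> 4 * t" using pi4 t by (intro mult_right_mono) auto
  have oneE: "0 \<le> 1 - E" "1 - E \<le> 8 * t"
  proof -
    have "E \<le> 1" unfolding E_def using t by simp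
    thus "0 \<le> 1 - E" by simp
    show "1 - E \<le> 8 * t" using Elo pt by linarith
  qed
  have s45: "sin (pi/4) \<ge> 6/10"
  proof -
    have "(14/10)^2 \<le> (2::real)" by (simp add: power2_eq_square)
    hence "14/10 \<le> sqrt 2" by (rule real_le_rsqrt)
    thus ?thesis by (simp add: sin_45)
  qed
  have thb: "\<bar>\<theta>\<bar> \<le> 1/10" using th K by linarith
  have sinp: "sin p \<ge> 1/2"
  proof -
    have "\<bar>sin p - sin (pi/4)\<bar> \<le> \<bar>p - pi/4\<bar>" by (rule sin_lip)
    hence "\<bar>sin p - sin (pi/4)\<bar> \<le> 1/10" using thb by (simp add: p_def)
    thus ?thesis using s45 unfolding abs_le_iff by linarith
  qed
  have sinq: "\<bar>sin q\<bar> \<le> 8 * t"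
  proof -
    have "2 * sin p * \<bar>sin q\<bar> = (1 - E) * \<bar>cos (p - q)\<bar>"
      using ident oneE sinp by (metis abs_mult abs_of_nonneg abs_of_pos mult_pos_pos zero_less_numeral
          less_le_trans zero_less_divide_1_iff)
    also have "\<dots> \<le> (1 - E) * 1" using oneE by (intro mult_left_mono) auto
    finally have "2 * sin p * \<bar>sin q\<bar> \<le> 8 * t" using oneE by (simp only: mult_1_right)
    moreover have "1 * \<bar>sin q\<bar> \<le> 2 * sin p * \<bar>sin q\<bar>" using sinp by (intro mult_right_mono) auto
    ultimately show ?thesis by linarith
  qed
  have sq: "\<bar>sin q - q\<bar> \<le> \<bar>q\<bar>^3 / 6" by (rule sin_cubic)
  have q3: "\<bar>q\<bar>^3 \<le> \<bar>q\<bar>" using power_decreasing[of 1 3 "\<bar>q\<bar>"] qb by simp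
  have "\<bar>q\<bar> \<le> \<bar>sin q\<bar> + \<bar>q - sin q\<bar>" using abs_triangle_ineq[of "sin q" "q - sin q"] by simp
  hence qt: "\<bar>q\<bar> \<le> 16 * t" using sq q3 sinq abs_minus_commute[of q "sin q"] t by linarith
  have "sqrt 2 \<le> sqrt 4" by (rule real_sqrt_le_mono) simp
  hence sqrt2: "sqrt 2 \<le> 2" by (simp add: real_sqrt_four)
  have sqrt2': "sqrt 2 \<ge> 1" by simp
  have decomp: "sqrt 2 * (q - pi * t) = sqrt 2 * (q - sin q) + (sqrt 2 - 2 * sin p) * sin q
      + (1 - E) * (cos (p - q) - sqrt 2 / 2) + (sqrt 2 / 2) * ((1 - E) - 2 * pi * t)"
    using decomp_aux[OF ident, of "sqrt 2" q "2 * pi * t"] by (simp add: mult_ac)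
  have B1: "\<bar>sqrt 2 * (q - sin q)\<bar> \<le> 1366 * t^2"
  proof -
    have "\<bar>sqrt 2 * (q - sin q)\<bar> = sqrt 2 * \<bar>sin q - q\<bar>" by (simp add: abs_mult abs_minus_commute)
    also have "\<dots> \<le> 2 * (\<bar>q\<bar>^3 / 6)" using sq sqrt2 by (intro mult_mono) auto
    also have "\<dots> \<le> 2 * ((16 * t)^3 / 6)" using qt by (intro mult_left_mono divide_right_mono power_mono) auto
    also have "\<dots> = 4096 / 3 * t^2 * t" by (simp add: power_mult_distrib power3_eq_cube power2_eq_square)
    also have "\<dots> \<le> 4096 / 3 * t^2 * 1" using t by (intro mult_left_mono) auto
    finally show ?thesis by simp
  qed
  have B2: "\<bar>(sqrt 2 - 2 * sin p) * sin q\<bar> \<le> 16 * K * t^2"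
  proof -
    have "sqrt 2 - 2 * sin p = 2 * (sin (pi/4) - sin p)" by (simp add: sin_45 algebra_simps)
    hence "\<bar>sqrt 2 - 2 * sin p\<bar> = \<bar>2 * (sin (pi/4) - sin p)\<bar>" by (simp only:)
    also have "\<dots> = 2 * \<bar>sin (pi/4) - sin p\<bar>" by (simp only: abs_mult)
    also have "\<dots> \<le> 2 * \<bar>pi/4 - p\<bar>" using sin_lip by simp
    also have "\<dots> \<le> 2 * (K * t)" using th by (simp add: p_def)
    finally have "\<bar>sqrt 2 - 2 * sin p\<bar> \<le> 2 * (K * t)" .
    hence "\<bar>(sqrt 2 - 2 * sin p) * sin q\<bar> \<le> (2 * (K * t)) * (8 * t)"
      unfolding abs_mult using sinq by (intro mult_mono) auto
    thus ?thesis by (simp add: power2_eq_square mult_ac)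
  qed
  have B3: "\<bar>(1 - E) * (cos (p - q) - sqrt 2 / 2)\<bar> \<le> (8 * K + 128) * t^2"
  proof -
    have "\<bar>cos (p - q) - sqrt 2 / 2\<bar> = \<bar>cos (p - q) - cos (pi/4)\<bar>" by (simp only: cos_45)
    also have "\<dots> \<le> \<bar>(p - q) - pi/4\<bar>" by (rule cos_lip)
    also have "(p - q) - pi/4 = \<theta> - q" by (simp add: p_def)
    also have "\<bar>\<theta> - q\<bar> \<le> \<bar>\<theta>\<bar> + \<bar>q\<bar>" by (rule abs_triangle_ineq4)
    also have "\<dots> \<le> K * t + 16 * t" using th qt by linarith
    finally have c: "\<bar>cos (p - q) - sqrt 2 / 2\<bar> \<le> K * t + 16 * t" .
    have "\<bar>(1 - E) * (cos (p - q) - sqrt 2 / 2)\<bar> \<le> (8 * t) * (K * t + 16 * t)"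
      unfolding abs_mult using oneE c by (intro mult_mono) auto
    thus ?thesis by (simp add: power2_eq_square algebra_simps)
  qed
  have B4: "\<bar>(sqrt 2 / 2) * ((1 - E) - 2 * pi * t)\<bar> \<le> 32 * t^2"
  proof -
    have "\<bar>(1 - E) - 2 * pi * t\<bar> \<le> (2 * pi * t)^2 / 2" using Elo Ehi by (simp add: abs_le_iff)
    also have "\<dots> \<le> (8 * t)^2 / 2" using pt t by (intro divide_right_mono power_mono) auto
    finally have "\<bar>(1 - E) - 2 * pi * t\<bar> \<le> 32 * t^2" by (simp add: power_mult_distrib)
    moreover have "\<bar>sqrt 2 / 2\<bar> \<le> 1" using sqrt2 by simp
    ultimately show ?thesis unfolding abs_mult
      using mult_mono[of "\<bar>sqrt 2 / 2\<bar>" 1 "\<bar>(1 - E) - 2 * pi * t\<bar>" "32 * t^2"] by simp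
  qed
  have "\<bar>sqrt 2 * (q - pi * t)\<bar> \<le> 1366 * t^2 + 16 * K * t^2 + (8 * K + 128) * t^2 + 32 * t^2"
    unfolding decomp using B1 B2 B3 B4 by linarith
  also have "\<dots> = (1526 + 24 * K) * t^2" by (simp add: algebra_simps)
  finally have m: "\<bar>sqrt 2 * (q - pi * t)\<bar> \<le> (1526 + 24 * K) * t^2" .
  have "1 * \<bar>q - pi * t\<bar> \<le> sqrt 2 * \<bar>q - pi * t\<bar>" using sqrt2' by (intro mult_right_mono) auto
  hence "\<bar>q - pi * t\<bar> \<le> \<bar>sqrt 2 * (q - pi * t)\<bar>" by (simp add: abs_mult)
  hence m2: "\<bar>q - pi * t\<bar> \<le> (1526 + 24 * K) * t^2" using m by linarith
  have "q - pi * t = pi * (a - t)" by (simp add: q_def algebra_simps)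
  hence "\<bar>q - pi * t\<bar> = pi * \<bar>a - t\<bar>" by (simp add: abs_mult)
  moreover have "1 * \<bar>a - t\<bar> \<le> pi * \<bar>a - t\<bar>" using pi_ge_two by (intro mult_right_mono) auto
  ultimately have at: "\<bar>a - t\<bar> \<le> (1526 + 24 * K) * t^2" using m2 by (simp only: mult_1_left)
  have "2 * s - 1/2 + 2 * t = 2 * (t - a)" by (simp add: a_def algebra_simps)
  hence "\<bar>2 * s - 1/2 + 2 * t\<bar> = 2 * \<bar>t - a\<bar>" by (simp only: abs_mult abs_numeral)
  hence e: "\<bar>2 * s - 1/2 + 2 * t\<bar> = 2 * \<bar>a - t\<bar>" by (simp add: abs_minus_commute)
  have "0 \<le> t^2" by simp
  hence "2 * ((1526 + 24 * K) * t^2) \<le> (3200 + 48 * K) * t^2" by (simp add: algebra_simps)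
  moreover have "2 * \<bar>a - t\<bar> \<le> 2 * ((1526 + 24 * K) * t^2)" using at by (rule mult_left_mono) simp
  ultimately show ?thesis unfolding e by (rule order_trans[rotated])
qed



theorem theorem1p4:
  fixes \<sigma> :: "real \<Rightarrow> real"
  assumes sigma_range: "\<And>h. h > 0 \<Longrightarrow> 0 < \<sigma> h \<and> \<sigma> h < 1"
    and sigma_pos: "\<And>h. h > 0 \<Longrightarrow>
          real_pos (A_fun (complex_of_real (- 1 / h) - \<i> * complex_of_real (\<sigma> h)))"
    and sigma_unique: "\<And>h s. h > 0 \<Longrightarrow> 0 < s \<Longrightarrow> s < 1 \<Longrightarrow>
          real_pos (A_fun (complex_of_real (- 1 / h) - \<i> * complex_of_real s)) \<Longrightarrow> s = \<sigma> h"
  shows "(\<lambda>h. \<sigma> h / (2 * exp (- pi / h) / h) - 1) \<in> O[at_right 0](\<lambda>h. h)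
    \<and> (\<lambda>h. \<sigma> h - (1/2 - 1/h)) \<in> O[at_top](\<lambda>h. 1 / h^2)"
proof
  show "(\<lambda>h. \<sigma> h / (2 * exp (- pi / h) / h) - 1) \<in> O[at_right 0](\<lambda>h. h)"
  proof (rule bigoI[where c = 6000])
    have ev: "\<forall>\<^sub>F h in at_right 0. h \<in> {0<..<1/64::real}"
      using eventually_at_right_real[of 0 "1/64::real"] by simp
    show "\<forall>\<^sub>F h in at_right 0. norm (\<sigma> h / (2 * exp (- pi / h) / h) - 1) \<le> 6000 * norm h"
    proof (rule eventually_mono[OF ev])
      fix h :: real assume "h \<in> {0<..<1/64}"
      hence h: "0 < h" "h < 1/64" by auto
      define t where "t = 1 / (2 * h)"
      define s where "s = \<sigma> h / 2"
      define \<theta> where "\<theta> = Im (ln_Gamma (Complex (3/4 + s) t)) - Im (ln_Gamma (Complex (3/4 - s) t))"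
      have t32: "t \<ge> 32" using h by (simp add: t_def field_simps)
      have s: "0 < s" "s \<le> 1/2" using sigma_range[OF h(1)] by (auto simp: s_def)
      have eq: "sin (pi * s - \<theta>) = exp (- 2 * pi * t) * cos (pi * s + \<theta>)"
        using star[OF h(1) sigma_pos[OF h(1)]] unfolding s_def t_def \<theta>_def .
      have th: "\<bar>\<theta> - (pi * s - s / (2 * t))\<bar> \<le> 8 * s / t^2"
        unfolding \<theta>_def using t32 s by (intro theta_large) auto
      have main: "\<bar>s / (2 * t * exp (- 2 * pi * t)) - 1\<bar> \<le> 3000 / t"
        by (rule small_regime[OF t32 s th eq])
      have "\<sigma> h / (2 * exp (- pi / h) / h) = s / (2 * t * exp (- 2 * pi * t))"
        using h by (simp add: s_def t_def field_simps)
      moreover have "3000 / t = 6000 * h" using h by (simp add: t_def)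
      ultimately show "norm (\<sigma> h / (2 * exp (- pi / h) / h) - 1) \<le> 6000 * norm h"
        using main h by simp
    qed
  qed
next
  define K where "K = 16 * M0"
  have K0: "K \<ge> 0" using M0_nonneg by (simp add: K_def)
  show "(\<lambda>h. \<sigma> h - (1/2 - 1/h)) \<in> O[at_top](\<lambda>h. 1 / h^2)"
  proof (rule bigoI[where c = "(3200 + 48 * K) / 4"])
    show "\<forall>\<^sub>F h in at_top. norm (\<sigma> h - (1/2 - 1/h)) \<le> (3200 + 48 * K) / 4 * norm (1 / h^2)"
    proof (rule eventually_mono[OF eventually_ge_at_top[of "8 * K + 1"]])
      fix h :: real assume hK: "8 * K + 1 \<le> h"
      have h: "h > 0" using hK K0 by linarith
      define t where "t = 1 / (2 * h)"
      define s where "s = \<sigma> h / 2"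
      define \<theta> where "\<theta> = Im (ln_Gamma (Complex (3/4 + s) t)) - Im (ln_Gamma (Complex (3/4 - s) t))"
      have t: "0 < t" "t \<le> 1" using h hK K0 by (auto simp: t_def field_simps)
      have Kt: "K * t \<le> 1/10"
      proof -
        have "K * t = K / (2 * h)" by (simp add: t_def)
        also have "\<dots> \<le> 1/10" using hK K0 h by (simp add: divide_simps)
        finally show ?thesis .
      qed
      have s: "0 < s" "s < 1/2" using sigma_range[OF h] by (auto simp: s_def)
      have eq: "sin (pi * s - \<theta>) = exp (- 2 * pi * t) * cos (pi * s + \<theta>)"
        using star[OF h sigma_pos[OF h]] unfolding s_def t_def \<theta>_def .
      have th: "\<bar>\<theta>\<bar> \<le> K * t"
        unfolding \<theta>_def K_def using theta_small[OF t(1) s(1)] s by (simp add: mult_ac)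
      have main: "\<bar>2 * s - 1/2 + 2 * t\<bar> \<le> (3200 + 48 * K) * t^2"
        by (rule large_regime[OF t K0 Kt s th eq])
      have "\<sigma> h - (1/2 - 1/h) = 2 * s - 1/2 + 2 * t" using h by (simp add: s_def t_def)
      moreover have "(3200 + 48 * K) * t^2 = (3200 + 48 * K) / 4 * norm (1 / h^2)"
        using h by (simp add: t_def power2_eq_square)
      ultimately show "norm (\<sigma> h - (1/2 - 1/h)) \<le> (3200 + 48 * K) / 4 * norm (1 / h^2)"
        using main by simp
    qed
  qed
qed

end
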